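(* Let $\Delta\vdash t$ be a closed nominal term-in-context and $\sigma$ a nominal substitution satisfying $\Delta$ (i.e., $\vdash a\#X\sigma$ for all $a\#X\in\Delta$) with domain contained in the variables of $t$ and $t\sigma$ ground. Let $\hat\sigma=\mathcal{T}^{s}(\Delta,t,\sigma)$. Then for every subterm $t'$ of $t$ (in particular $t'=t$), $[\![t'\sigma]\!]^{\Delta}_{\Lambda_t}=\hat\sigma([\![t']\!]^{\Delta}_{\Lambda_t})$.
   Context: Nominal terms: $s,t ::= a \mid \pi\cdot X \mid [a]s \mid f\,s \mid (s_1,\ldots,s_n)$ over atoms, variables, function symbols and finite-support permutations $\pi$ of atoms acting on terms in the usual nominal way. A freshness context $\Delta$ is a set of constraints $a\#X$; freshness judgements $\vdash a\#s$ are the standard nominal ones. Substitutions map variables to terms and are applied without avoiding capture, $(\pi\cdot X)\sigma=\pi\cdot(X\sigma)$. $\Delta\vdash t$ is closed if: (1) every atom occurrence $a$ in $t$ lies under an abstraction $[a]$; (2) if $\pi\cdot X$ is in the scope of an abstraction of $\pi(a)$ then every occurrence $\pi'\cdot X$ of $X$ in $t$ is in the scope of an abstraction of $\pi'(a)$, or $a\#X\in\Delta$; (3) for two occurrences $\pi_1\cdot X,\pi_2\cdot X$ and $a$ with $\pi_1(a)\neq\pi_2(a)$, if $a$ is not abstracted in one of the occurrences then $a\#X\in\Delta$. CRS: meta-terms $a\mid Z(t_1,\dots,t_n)\mid[a]t\mid f\,t\mid(t_1,\dots,t_n)$ modulo bound-variable renaming; a valuation assigns to an $n$-ary meta-variable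 a substitute $\underline{\lambda}(a_1,\dots,a_n).s$, and $\hat\sigma(Z(u_1,\dots,u_n))$ is $s$ with each $a_i$ replaced capture-avoidingly by $\hat\sigma(u_i)$, $\hat\sigma$ homomorphic on other constructs. Translation: $\Lambda_t(X)$ is the set of atoms $a$ such that some occurrence of $X$ in $t$ is in the scope of $[a]$ (a map from variables to sets of atoms). Fix a total order on atoms. For a map $\Lambda$ from variables to atom sets, $[\![\cdot]\!]^{\Delta}_{\Lambda}$ keeps atoms, abstractions, function applications and tuples unchanged and maps $\pi\cdot X$ to $X(\pi\cdot xs)$, where $xs$ is the ascending list of $\{\pi^{-1}(a)\mid a\in\Lambda(X)\}\setminus\{a\mid a\#X\in\Delta\}$ and $\pi$ is applied elementwise (no arguments if empty). Substitution translation: for $\sigma=[X_i\mapsto t_i]$, $\mathcal{T}^{s}(\Delta,t,\sigma)=[X_i\mapsto\underline{\lambda}(\pi_i\cdot xs_i).s_i]$, where $\pi_i$ is the permutation of the leftmost occurrence $\pi_i\cdot X_i$ of $X_i$ in $t$, $xs_i$ is the ascending list of $\{\pi_i^{-1}(a)\mid a\in\Lambda_t(X_i)\}\setminus\{a\mid a\#X_i\in\Delta\}$, and $s_i=[\![\pi_i\cdot t_i]\!]^{\Delta}_{\Lambda_{\pi_i\cdot t_i}}$. *)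

theory Defs
  imports Main "HOL-Combinatorics.Perm"
begin

text \<open>Atoms are natural numbers; the fixed total order on atoms is the usual order on nat.
  Variables (= CRS meta-variables) have type 'v, function symbols type 'f.\<close>

type_synonym atom = nat

datatype ('f, 'v) nterm =
    Atm atom
  | Susp "atom perm" 'v
  | Abs atom "('f, 'v) nterm"
  | Fn 'f "('f, 'v) nterm"
  | Tup "('f, 'v) nterm list"

fun pact :: "atom perm \<Rightarrow> ('f, 'v) nterm \<Rightarrow> ('f, 'v) nterm" where
  "pact p (Atm a) = Atm (Perm.apply p a)"
| "pact p (Susp q X) = Susp (p * q) X"
| "pact p (Abs a s) = Abs (Perm.apply p a) (pact p s)"
| "pact p (Fn f s) = Fn f (pact p s)"
| "pact p (Tup ts) = Tup (map (pact p) ts)"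

text \<open>Freshness judgement  Delta |- a # s  (Delta a set of constraints a # X, as pairs (a, X)).\<close>
fun fresh :: "(atom \<times> 'v) set \<Rightarrow> atom \<Rightarrow> ('f, 'v) nterm \<Rightarrow> bool" where
  "fresh D a (Atm b) = (a \<noteq> b)"
| "fresh D a (Susp p X) = ((Perm.apply (inverse p) a, X) \<in> D)"
| "fresh D a (Abs b s) = (a = b \<or> fresh D a s)"
| "fresh D a (Fn f s) = fresh D a s"
| "fresh D a (Tup ts) = (\<forall>s\<in>set ts. fresh D a s)"

text \<open>Substitution (not capture avoiding): (pi . X) sigma = pi . (X sigma).\<close>
fun nsubst :: "('v \<rightharpoonup> ('f, 'v) nterm) \<Rightarrow> ('f, 'v) nterm \<Rightarrow> ('f, 'v) nterm" where
  "nsubst \<sigma> (Atm a) = Atm a"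
| "nsubst \<sigma> (Susp p X) = (case \<sigma> X of Some s \<Rightarrow> pact p s | None \<Rightarrow> Susp p X)"
| "nsubst \<sigma> (Abs a s) = Abs a (nsubst \<sigma> s)"
| "nsubst \<sigma> (Fn f s) = Fn f (nsubst \<sigma> s)"
| "nsubst \<sigma> (Tup ts) = Tup (map (nsubst \<sigma>) ts)"

text \<open>Occurrences of variables, in left-to-right order, each with the set of atoms
  abstracted above it (its scope).\<close>
fun occsB :: "atom set \<Rightarrow> ('f, 'v) nterm \<Rightarrow> (atom set \<times> atom perm \<times> 'v) list" where
  "occsB B (Atm a) = []"
| "occsB B (Susp p X) = [(B, p, X)]"
| "occsB B (Abs a s) = occsB (insert a B) s"
| "occsB B (Fn f s) = occsB B s"
| "occsB B (Tup ts) = concat (map (occsB B) ts)"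

definition occs :: "('f, 'v) nterm \<Rightarrow> (atom set \<times> atom perm \<times> 'v) list" where
  "occs t = occsB {} t"

fun aoccsB :: "atom set \<Rightarrow> ('f, 'v) nterm \<Rightarrow> (atom set \<times> atom) list" where
  "aoccsB B (Atm a) = [(B, a)]"
| "aoccsB B (Susp p X) = []"
| "aoccsB B (Abs a s) = aoccsB (insert a B) s"
| "aoccsB B (Fn f s) = aoccsB B s"
| "aoccsB B (Tup ts) = concat (map (aoccsB B) ts)"

definition vars :: "('f, 'v) nterm \<Rightarrow> 'v set" where
  "vars t = {X. \<exists>B p. (B, p, X) \<in> set (occs t)}"

definition ground :: "('f, 'v) nterm \<Rightarrow> bool" where
  "ground t \<longleftrightarrow> vars t = {}"

fun subterms :: "('f, 'v) nterm \<Rightarrow> ('f, 'v) nterm set" where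
  "subterms (Atm a) = {Atm a}"
| "subterms (Susp p X) = {Susp p X}"
| "subterms (Abs a s) = insert (Abs a s) (subterms s)"
| "subterms (Fn f s) = insert (Fn f s) (subterms s)"
| "subterms (Tup ts) = insert (Tup ts) (\<Union> (set (map subterms ts)))"

definition closed :: "(atom \<times> 'v) set \<Rightarrow> ('f, 'v) nterm \<Rightarrow> bool" where
  "closed D t \<longleftrightarrow>
     (\<forall>(B, a) \<in> set (aoccsB {} t). a \<in> B) \<and>
     (\<forall>(B, p, X) \<in> set (occs t). \<forall>a. Perm.apply p a \<in> B \<longrightarrow>
         (\<forall>(B', p', X') \<in> set (occs t). X' = X \<longrightarrow> Perm.apply p' a \<in> B') \<or> (a, X) \<in> D) \<and>
     (\<forall>(B1, p1, X1) \<in> set (occs t). \<forall>(B2, p2, X2) \<in> set (occs t). \<forall>a.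
         X1 = X2 \<longrightarrow> Perm.apply p1 a \<noteq> Perm.apply p2 a \<longrightarrow>
         (Perm.apply p1 a \<notin> B1 \<or> Perm.apply p2 a \<notin> B2) \<longrightarrow> (a, X1) \<in> D)"

definition lam :: "('f, 'v) nterm \<Rightarrow> 'v \<Rightarrow> atom set" where
  "lam t X = {a. \<exists>B p. (B, p, X) \<in> set (occs t) \<and> a \<in> B}"

datatype ('f, 'v) mterm =
    MAtm atom
  | MVar 'v "('f, 'v) mterm list"
  | MAbs atom "('f, 'v) mterm"
  | MFn 'f "('f, 'v) mterm"
  | MTup "('f, 'v) mterm list"

fun fv :: "('f, 'v) mterm \<Rightarrow> atom set" where
  "fv (MAtm a) = {a}"
| "fv (MVar Z us) = \<Union> (set (map fv us))"
| "fv (MAbs a s) = fv s - {a}"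
| "fv (MFn f s) = fv s"
| "fv (MTup us) = \<Union> (set (map fv us))"

definition fresh_for :: "atom set \<Rightarrow> atom \<Rightarrow> atom" where
  "fresh_for S b = (if b \<notin> S then b else (LEAST c. c \<notin> S))"

fun msubst :: "(atom \<Rightarrow> ('f, 'v) mterm) \<Rightarrow> ('f, 'v) mterm \<Rightarrow> ('f, 'v) mterm" where
  "msubst \<rho> (MAtm a) = \<rho> a"
| "msubst \<rho> (MVar Z us) = MVar Z (map (msubst \<rho>) us)"
| "msubst \<rho> (MAbs b s) =
     (let c = fresh_for (\<Union>a\<in>fv s - {b}. fv (\<rho> a)) b
      in MAbs c (msubst (\<rho>(b := MAtm c)) s))"
| "msubst \<rho> (MFn f s) = MFn f (msubst \<rho> s)"
| "msubst \<rho> (MTup us) = MTup (map (msubst \<rho>) us)"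

inductive alpha :: "('f, 'v) mterm \<Rightarrow> ('f, 'v) mterm \<Rightarrow> bool" where
  "alpha (MAtm a) (MAtm a)"
| "list_all2 alpha us vs \<Longrightarrow> alpha (MVar Z us) (MVar Z vs)"
| "c \<notin> fv s \<union> fv t \<Longrightarrow>
   alpha (msubst (MAtm(a := MAtm c)) s) (msubst (MAtm(b := MAtm c)) t) \<Longrightarrow>
   alpha (MAbs a s) (MAbs b t)"
| "alpha s t \<Longrightarrow> alpha (MFn f s) (MFn f t)"
| "list_all2 alpha us vs \<Longrightarrow> alpha (MTup us) (MTup vs)"

text \<open>Valuations: a meta-variable Z is mapped to a substitute lambda(a1,...,an).s,
  represented as the pair ([a1,...,an], s).\<close>
type_synonym ('f, 'v) valuation = "'v \<rightharpoonup> (atom list \<times> ('f, 'v) mterm)"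

definition sfv :: "('f, 'v) valuation \<Rightarrow> atom set" where
  "sfv V = (\<Union>{fv s - set as | Z as s. V Z = Some (as, s)})"

text \<open>Application of a valuation; rho is a pending (capture-avoiding) renaming of atoms,
  used to rename bound atoms away from the free atoms of the substitutes.\<close>
fun vapp :: "('f, 'v) valuation \<Rightarrow> (atom \<Rightarrow> ('f, 'v) mterm) \<Rightarrow> ('f, 'v) mterm \<Rightarrow> ('f, 'v) mterm" where
  "vapp V \<rho> (MAtm a) = \<rho> a"
| "vapp V \<rho> (MVar Z us) =
     (case V Z of
        None \<Rightarrow> MVar Z (map (vapp V \<rho>) us)
      | Some (as, s) \<Rightarrow>
          msubst (\<lambda>a. case map_of (zip as (map (vapp V \<rho>) us)) a of
                         Some u \<Rightarrow> u | None \<Rightarrow> MAtm a) s)"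
| "vapp V \<rho> (MAbs b s) =
     (let c = fresh_for ((\<Union>a\<in>fv s - {b}. fv (\<rho> a)) \<union> sfv V) b
      in MAbs c (vapp V (\<rho>(b := MAtm c)) s))"
| "vapp V \<rho> (MFn f s) = MFn f (vapp V \<rho> s)"
| "vapp V \<rho> (MTup us) = MTup (map (vapp V \<rho>) us)"

definition apply_val :: "('f, 'v) valuation \<Rightarrow> ('f, 'v) mterm \<Rightarrow> ('f, 'v) mterm" where
  "apply_val V t = vapp V MAtm t"

fun tr :: "(atom \<times> 'v) set \<Rightarrow> ('v \<Rightarrow> atom set) \<Rightarrow> ('f, 'v) nterm \<Rightarrow> ('f, 'v) mterm" where
  "tr D L (Atm a) = MAtm a"
| "tr D L (Susp p X) =
     MVar X (map (\<lambda>a. MAtm (Perm.apply p a))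
       (sorted_list_of_set ((\<lambda>a. Perm.apply (inverse p) a) ` L X - {a. (a, X) \<in> D})))"
| "tr D L (Abs a s) = MAbs a (tr D L s)"
| "tr D L (Fn f s) = MFn f (tr D L s)"
| "tr D L (Tup ts) = MTup (map (tr D L) ts)"

definition lperm :: "('f, 'v) nterm \<Rightarrow> 'v \<Rightarrow> atom perm" where
  "lperm t X = fst (snd (hd (filter (\<lambda>oc. snd (snd oc) = X) (occs t))))"

definition subst_tr :: "(atom \<times> 'v) set \<Rightarrow> ('f, 'v) nterm \<Rightarrow> ('v \<rightharpoonup> ('f, 'v) nterm)
                        \<Rightarrow> ('f, 'v) valuation" where
  "subst_tr D t \<sigma> X =
     (case \<sigma> X of
        None \<Rightarrow> None
      | Some ti \<Rightarrow>
          (let p = lperm t X;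
               xs = sorted_list_of_set ((\<lambda>a. Perm.apply (inverse p) a) ` lam t X - {a. (a, X) \<in> D})
           in Some (map (\<lambda>a. Perm.apply p a) xs, tr D (lam (pact p ti)) (pact p ti))))"

end

theory Submission
  imports Defs
begin


lemma perm_ai[simp]: "Perm.apply p (Perm.apply (inverse p) a) = a"
  by (simp add: apply_inverse surj_f_inv_f bij_is_surj)
lemma perm_ia[simp]: "Perm.apply (inverse p) (Perm.apply p a) = a"
  by (simp add: apply_inverse inv_f_f bij_is_inj)

lemma fresh_for_notin:
  assumes "finite S" shows "fresh_for S b \<notin> S"
proof -
  obtain c where "c \<notin> S" using ex_new_if_finite[OF infinite_UNIV_nat assms] by auto
  then have "(LEAST c. c \<notin> S) \<notin> S" by (rule LeastI)
  then show ?thesis by (simp add: fresh_for_def)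
qed

lemma finite_fv: "finite (fv s)"
  by (induction s) auto

datatype ('f, 'v) dterm = DF atom | DL nat | DVar 'v "('f, 'v) dterm list"
  | DAbs "('f, 'v) dterm" | DFn 'f "('f, 'v) dterm" | DTup "('f, 'v) dterm list"

fun nl :: "nat \<Rightarrow> (atom \<Rightarrow> ('f,'v) dterm) \<Rightarrow> ('f,'v) mterm \<Rightarrow> ('f,'v) dterm" where
  "nl k g (MAtm a) = g a"
| "nl k g (MVar Z us) = DVar Z (map (nl k g) us)"
| "nl k g (MAbs a s) = DAbs (nl (Suc k) (g(a := DL k)) s)"
| "nl k g (MFn f s) = DFn f (nl k g s)"
| "nl k g (MTup us) = DTup (map (nl k g) us)"

fun rl :: "(('f,'v) dterm \<Rightarrow> ('f,'v) dterm) \<Rightarrow> ('f,'v) dterm \<Rightarrow> ('f,'v) dterm" where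
  "rl h (DF a) = h (DF a)"
| "rl h (DL i) = h (DL i)"
| "rl h (DVar Z us) = DVar Z (map (rl h) us)"
| "rl h (DAbs s) = DAbs (rl h s)"
| "rl h (DFn f s) = DFn f (rl h s)"
| "rl h (DTup us) = DTup (map (rl h) us)"

lemma nl_cong: "(\<And>x. x \<in> fv s \<Longrightarrow> g x = g' x) \<Longrightarrow> nl k g s = nl k g' s"
proof (induction s arbitrary: k g g')
  case (MAbs a s)
  have "nl (Suc k) (g(a := DL k)) s = nl (Suc k) (g'(a := DL k)) s"
    by (rule MAbs.IH) (use MAbs.prems in auto)
  then show ?case by (simp only: nl.simps)
next
  case (MVar Z us)
  have "\<forall>u\<in>set us. nl k g u = nl k g' u"
  proof
    fix u assume u: "u \<in> set us"
    show "nl k g u = nl k g' u" by (rule MVar.IH[OF u]) (use MVar.prems u in auto)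
  qed
  then show ?case by (simp cong: map_cong)
next
  case (MTup us)
  have "\<forall>u\<in>set us. nl k g u = nl k g' u"
  proof
    fix u assume u: "u \<in> set us"
    show "nl k g u = nl k g' u" by (rule MTup.IH[OF u]) (use MTup.prems u in auto)
  qed
  then show ?case by (simp cong: map_cong)
next
  case (MFn f s) show ?case using MFn.IH[where k=k and g=g and g'=g'] MFn.prems by simp
next
  case (MAtm a) show ?case using MAtm.prems by simp
qed

lemma nl_rl: "(\<And>x. x \<in> fv s \<Longrightarrow> rl h (g x) = g' x) \<Longrightarrow> (\<And>j. h (DL (k+j)) = DL (k'+j))
  \<Longrightarrow> rl h (nl k g s) = nl k' g' s"
proof (induction s arbitrary: k k' g g')
  case (MAbs a s)
  have "rl h (nl (Suc k) (g(a := DL k)) s) = nl (Suc k') (g'(a := DL k')) s"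
  proof (rule MAbs.IH)
    fix x assume "x \<in> fv s"
    then show "rl h ((g(a := DL k)) x) = (g'(a := DL k')) x"
      using MAbs.prems(1) MAbs.prems(2)[of 0] by auto
  next
    fix j show "h (DL (Suc k + j)) = DL (Suc k' + j)"
      using MAbs.prems(2)[of "Suc j"] by simp
  qed
  then show ?case by (simp only: nl.simps rl.simps)
next
  case (MVar Z us)
  have "\<forall>u\<in>set us. rl h (nl k g u) = nl k' g' u"
  proof
    fix u assume u: "u \<in> set us"
    show "rl h (nl k g u) = nl k' g' u"
      by (rule MVar.IH[OF u]) (use MVar.prems u in auto)
  qed
  then show ?case by (simp cong: map_cong)
next
  case (MTup us)
  have "\<forall>u\<in>set us. rl h (nl k g u) = nl k' g' u"
  proof
    fix u assume u: "u \<in> set us"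
    show "rl h (nl k g u) = nl k' g' u"
      by (rule MTup.IH[OF u]) (use MTup.prems u in auto)
  qed
  then show ?case by (simp cong: map_cong)
next
  case (MFn f s) show ?case using MFn.IH[where k=k and g=g and k'=k' and g'=g'] MFn.prems by simp
next
  case (MAtm a) show ?case using MAtm.prems by simp
qed

lemma nl_msubst: "\<rho> = MAtm \<circ> f \<Longrightarrow> nl k g (msubst \<rho> s) = nl k (g \<circ> f) s"
proof (induction s arbitrary: k g f \<rho>)
  case (MAbs b s)
  define S where "S = (\<Union>a\<in>fv s - {b}. fv (\<rho> a))"
  define c where "c = fresh_for S b"
  have fin: "finite S" unfolding S_def by (simp add: finite_fv)
  have cS: "c \<notin> S" unfolding c_def by (rule fresh_for_notin[OF fin])
  have e: "\<rho>(b := MAtm c) = MAtm \<circ> f(b := c)" using MAbs.prems by auto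
  have "nl k g (msubst \<rho> (MAbs b s)) = DAbs (nl (Suc k) (g(c := DL k)) (msubst (\<rho>(b := MAtm c)) s))"
    by (simp add: Let_def S_def[symmetric] c_def[symmetric])
  also have "\<dots> = DAbs (nl (Suc k) (g(c := DL k) \<circ> f(b := c)) s)"
    by (subst MAbs.IH[OF e]) (rule refl)
  also have "\<dots> = DAbs (nl (Suc k) ((g \<circ> f)(b := DL k)) s)"
  proof (rule arg_cong[where f=DAbs], rule nl_cong)
    fix x assume "x \<in> fv s"
    show "(g(c := DL k) \<circ> f(b := c)) x = ((g \<circ> f)(b := DL k)) x"
    proof (cases "x = b")
      case False
      then have "f x \<in> S" using \<open>x \<in> fv s\<close> MAbs.prems unfolding S_def by auto
      then show ?thesis using False cS by auto
    qed simp
  qed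
  finally show ?case by (simp only: nl.simps)
next
  case (MAtm a) then show ?case by simp
next
  case (MFn h s) show ?case using MFn.IH[where \<rho>=\<rho> and f=f and k=k and g=g] MFn.prems by simp
next
  case (MVar Z us)
  have "\<forall>u\<in>set us. nl k g (msubst \<rho> u) = nl k (g \<circ> f) u"
    using MVar.IH MVar.prems by blast
  then show ?case by (simp del: comp_apply cong: map_cong) (simp only: comp_apply)
next
  case (MTup us)
  have "\<forall>u\<in>set us. nl k g (msubst \<rho> u) = nl k (g \<circ> f) u"
    using MTup.IH MTup.prems by blast
  then show ?case by (simp del: comp_apply cong: map_cong) (simp only: comp_apply)
qed

lemma size_msubst: "\<rho> = MAtm \<circ> f \<Longrightarrow> size (msubst \<rho> s) = size s"
proof (induction s arbitrary: f \<rho>)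
  case (MVar Z us)
  have "\<forall>u\<in>set us. size (msubst \<rho> u) = size u" using MVar.IH MVar.prems by blast
  then show ?case by (simp add: size_list_conv_sum_list cong: map_cong)
next
  case (MTup us)
  have "\<forall>u\<in>set us. size (msubst \<rho> u) = size u" using MTup.IH MTup.prems by blast
  then show ?case by (simp add: size_list_conv_sum_list cong: map_cong)
next
  case (MAbs b s)
  define c where "c = fresh_for (\<Union>a\<in>fv s - {b}. fv (\<rho> a)) b"
  have e: "\<rho>(b := MAtm c) = MAtm \<circ> f(b := c)" using MAbs.prems by auto
  have "size (msubst (\<rho>(b := MAtm c)) s) = size s" by (rule MAbs.IH[OF e])
  then show ?case by (simp add: Let_def c_def[symmetric])
next
  case (MFn h s) show ?case using MFn.IH[where \<rho>=\<rho> and f=f] MFn.prems by simp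
next
  case (MAtm a) then show ?case by simp
qed

lemma mem_size_lt: "u \<in> set us \<Longrightarrow> size u < Suc (size_list size us)"
  using size_list_estimation'[of u us "size u" size] by simp

lemma nl_list_alpha:
  assumes "map (nl 0 DF) us = map (nl 0 DF) vs"
    and IH: "\<And>u v. u \<in> set us \<Longrightarrow> nl 0 DF u = nl 0 DF v \<Longrightarrow> alpha u v"
  shows "list_all2 alpha us vs"
proof -
  have l: "length us = length vs" using map_eq_imp_length_eq[OF assms(1)] .
  show ?thesis unfolding list_all2_conv_all_nth
  proof (intro conjI l allI impI)
    fix i assume i: "i < length us"
    have "nl 0 DF (us ! i) = nl 0 DF (vs ! i)"
      using arg_cong[OF assms(1), of "\<lambda>xs. xs ! i"] i l by simp
    then show "alpha (us ! i) (vs ! i)" using IH i by auto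
  qed
qed

lemma nl_alpha: "nl 0 DF s = nl 0 DF t \<Longrightarrow> alpha s t"
proof (induction "size s" arbitrary: s t rule: less_induct)
  case less
  show ?case
  proof (cases s)
    case (MAtm a)
    then show ?thesis using less.prems by (cases t) (auto intro: alpha.intros)
  next
    case (MVar Z us)
    then obtain vs where t: "t = MVar Z vs" and e: "map (nl 0 DF) us = map (nl 0 DF) vs"
      using less.prems by (cases t) auto
    have "list_all2 alpha us vs"
      by (rule nl_list_alpha[OF e], rule less.hyps) (auto simp: MVar mem_size_lt)
    then show ?thesis using MVar t by (auto intro: alpha.intros)
  next
    case (MTup us)
    then obtain vs where t: "t = MTup vs" and e: "map (nl 0 DF) us = map (nl 0 DF) vs"
      using less.prems by (cases t) auto
    have "list_all2 alpha us vs"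
      by (rule nl_list_alpha[OF e], rule less.hyps) (auto simp: MTup mem_size_lt)
    then show ?thesis using MTup t by (auto intro: alpha.intros)
  next
    case (MFn f s1)
    then obtain t1 where t: "t = MFn f t1" and e: "nl 0 DF s1 = nl 0 DF t1"
      using less.prems by (cases t) auto
    have "alpha s1 t1" by (rule less.hyps[OF _ e]) (simp add: MFn)
    then show ?thesis using MFn t by (auto intro: alpha.intros)
  next
    case (MAbs a s1)
    then obtain b t1 where t: "t = MAbs b t1" and e: "nl 1 (DF(a := DL 0)) s1 = nl 1 (DF(b := DL 0)) t1"
      using less.prems by (cases t) auto
    obtain c where c: "c \<notin> fv s1 \<union> fv t1"
      using ex_new_if_finite[OF infinite_UNIV_nat, of "fv s1 \<union> fv t1"] by (auto simp: finite_fv)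
    define h :: "('a,'b) dterm \<Rightarrow> ('a,'b) dterm" where
      "h = (\<lambda>x. case x of DL 0 \<Rightarrow> DF c | DL (Suc j) \<Rightarrow> DL j | y \<Rightarrow> y)"
    have hl: "\<And>j. h (DL (1 + j)) = DL (0 + j)" by (simp add: h_def)
    have r1: "rl h (nl 1 (DF(a := DL 0)) s1) = nl 0 (DF(a := DF c)) s1"
      by (rule nl_rl[OF _ hl]) (simp add: h_def)
    have r2: "rl h (nl 1 (DF(b := DL 0)) t1) = nl 0 (DF(b := DF c)) t1"
      by (rule nl_rl[OF _ hl]) (simp add: h_def)
    have m1: "nl 0 DF (msubst (MAtm(a := MAtm c)) s1) = nl 0 (DF(a := DF c)) s1"
      by (subst nl_msubst[where f="id(a := c)"]) (auto intro!: nl_cong)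
    have m2: "nl 0 DF (msubst (MAtm(b := MAtm c)) t1) = nl 0 (DF(b := DF c)) t1"
      by (subst nl_msubst[where f="id(b := c)"]) (auto intro!: nl_cong)
    have sz: "size (msubst (MAtm(a := MAtm c)) s1) < size s"
      using size_msubst[where f="id(a := c)" and s=s1 and \<rho>="MAtm(a := MAtm c)"] by (auto simp: MAbs fun_eq_iff)
    have "alpha (msubst (MAtm(a := MAtm c)) s1) (msubst (MAtm(b := MAtm c)) t1)"
      by (rule less.hyps[OF sz]) (simp only: m1 m2 flip: r1 r2, simp only: e)
    then show ?thesis using MAbs t c by (auto intro: alpha.intros)
  qed
qed



fun ns :: "('f, 'v) nterm \<Rightarrow> bool" where
  "ns (Atm a) = True"
| "ns (Susp p X) = False"
| "ns (Abs a s) = ns s"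
| "ns (Fn f s) = ns s"
| "ns (Tup ts) = (\<forall>s\<in>set ts. ns s)"

lemma ns_occsB: "occsB B s = [] \<longleftrightarrow> ns s"
  by (induction s arbitrary: B) auto

lemma ns_pact: "ns (pact p s) = ns s"
  by (induction s) auto

lemma pact_one: "pact 1 s = s"
  by (induction s) (auto simp: map_idI)

lemma fv_tr_ns: "ns s \<Longrightarrow> fv (tr D L s) = {a. \<not> fresh {} a s}"
  by (induction s) auto

lemma fresh_pact: "ns s \<Longrightarrow> fresh {} a (pact p s) = fresh {} (Perm.apply (inverse p) a) s"
  by (induction s) auto

lemma nl_tr_pact: "ns s \<Longrightarrow> nl k g (tr D L (pact p s)) = nl k (g \<circ> Perm.apply p) (tr D' L' s)"
proof (induction s arbitrary: k g)
  case (Abs a s)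
  have e: "(g(Perm.apply p a := DL k)) \<circ> Perm.apply p = (g \<circ> Perm.apply p)(a := DL k)"
    by (auto simp: fun_eq_iff apply_inj)
  have "nl (Suc k) (g(Perm.apply p a := DL k)) (tr D L (pact p s)) = nl (Suc k) ((g \<circ> Perm.apply p)(a := DL k)) (tr D' L' s)"
    using Abs by (simp only: e ns.simps)
  then show ?case by (simp only: pact.simps tr.simps nl.simps)
next
  case (Tup ts) then show ?case by auto
qed auto

lemma occ_ground: "occsB B (nsubst \<sigma> s) = [] \<Longrightarrow> (B', p, X) \<in> set (occsB B s) \<Longrightarrow> \<exists>ti. \<sigma> X = Some ti \<and> ns ti"
proof (induction s arbitrary: B)
  case (Susp q Y)
  then show ?case by (cases "\<sigma> Y") (auto simp: ns_occsB ns_pact)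
next
  case (Tup ts) then show ?case by fastforce
qed auto

lemma occ_fin: "(B', p, X) \<in> set (occsB B s) \<Longrightarrow> finite B \<Longrightarrow> finite B'"
  by (induction s arbitrary: B) auto

lemma sub_occ: "t' \<in> subterms s \<Longrightarrow> \<exists>B'. set (occsB B' t') \<subseteq> set (occsB B s)"
proof (induction s arbitrary: B)
  case (Abs a s) then show ?case by (auto; blast)
next
  case (Tup ts) then show ?case by auto (metis (no_types, lifting) UN_upper order_trans)
qed auto



definition xsof :: "(atom \<times> 'v) set \<Rightarrow> ('f, 'v) nterm \<Rightarrow> atom perm \<Rightarrow> 'v \<Rightarrow> atom set" where
  "xsof D t q X = (\<lambda>a. Perm.apply (inverse q) a) ` lam t X - {a. (a, X) \<in> D}"

context
  fixes D :: "(atom \<times> 'v) set" and t :: "('f, 'v) nterm" and \<sigma> :: "'v \<rightharpoonup> ('f, 'v) nterm"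
  assumes cl: "closed D t"
    and frD: "\<forall>(a, X) \<in> D. fresh {} a (nsubst \<sigma> (Susp 1 X))"
    and dm: "dom \<sigma> \<subseteq> vars t"
    and gr: "ground (nsubst \<sigma> t)"
begin

lemma occ_some: "(B, p, X) \<in> set (occs t) \<Longrightarrow> \<exists>ti. \<sigma> X = Some ti \<and> ns ti"
proof -
  assume o: "(B, p, X) \<in> set (occs t)"
  have "occsB {} (nsubst \<sigma> t) = []"
  proof (rule ccontr)
    assume "occsB {} (nsubst \<sigma> t) \<noteq> []"
    then obtain a b c where "(a, b, c) \<in> set (occsB {} (nsubst \<sigma> t))" by (metis list.set_sel(1) prod_cases3)
    then have "c \<in> vars (nsubst \<sigma> t)" by (auto simp: vars_def occs_def)
    then show False using gr by (simp add: ground_def)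
  qed
  then show ?thesis using occ_ground[of "{}" \<sigma> t B p X] o by (auto simp: occs_def)
qed

lemma cond3: "(B1, p1, X) \<in> set (occs t) \<Longrightarrow> (B2, p2, X) \<in> set (occs t) \<Longrightarrow>
  Perm.apply p1 a \<noteq> Perm.apply p2 a \<Longrightarrow> Perm.apply p1 a \<notin> B1 \<or> Perm.apply p2 a \<notin> B2 \<Longrightarrow> (a, X) \<in> D"
proof -
  assume o1: "(B1, p1, X) \<in> set (occs t)" and o2: "(B2, p2, X) \<in> set (occs t)"
    and ne: "Perm.apply p1 a \<noteq> Perm.apply p2 a" and nb: "Perm.apply p1 a \<notin> B1 \<or> Perm.apply p2 a \<notin> B2"
  have c3: "\<forall>(B1, p1, X1) \<in> set (occs t). \<forall>(B2, p2, X2) \<in> set (occs t). \<forall>a.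
         X1 = X2 \<longrightarrow> Perm.apply p1 a \<noteq> Perm.apply p2 a \<longrightarrow>
         (Perm.apply p1 a \<notin> B1 \<or> Perm.apply p2 a \<notin> B2) \<longrightarrow> (a, X1) \<in> D"
    using cl unfolding closed_def by (elim conjE)
  have "\<forall>(B2, p2, X2) \<in> set (occs t). \<forall>a.
         X = X2 \<longrightarrow> Perm.apply p1 a \<noteq> Perm.apply p2 a \<longrightarrow>
         (Perm.apply p1 a \<notin> B1 \<or> Perm.apply p2 a \<notin> B2) \<longrightarrow> (a, X) \<in> D"
    using bspec[OF c3 o1] by (simp only: case_prod_conv)
  from bspec[OF this o2] have "\<forall>a. X = X \<longrightarrow> Perm.apply p1 a \<noteq> Perm.apply p2 a \<longrightarrow>
         (Perm.apply p1 a \<notin> B1 \<or> Perm.apply p2 a \<notin> B2) \<longrightarrow> (a, X) \<in> D"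
    by (simp only: case_prod_conv)
  then show "(a, X) \<in> D" using ne nb by blast
qed

lemma Dfresh: "(a, X) \<in> D \<Longrightarrow> \<sigma> X = Some ti \<Longrightarrow> fresh {} a ti"
  using frD by (auto simp: pact_one)

lemma lperm_occ: "(B, p, X) \<in> set (occs t) \<Longrightarrow> \<exists>B0. (B0, lperm t X, X) \<in> set (occs t)"
proof -
  assume a: "(B, p, X) \<in> set (occs t)"
  let ?l = "filter (\<lambda>oc. snd (snd oc) = X) (occs t)"
  have "\<exists>x\<in>set (occs t). snd (snd x) = X" using a by (intro bexI[of _ "(B, p, X)"]) auto
  then have "?l \<noteq> []" by (simp add: filter_empty_conv)
  then have "hd ?l \<in> set ?l" by (rule list.set_sel(1))
  then have h: "hd ?l \<in> set (occs t)" "snd (snd (hd ?l)) = X" by auto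
  obtain B0 p0 X0 where e: "hd ?l = (B0, p0, X0)" by (metis prod_cases3)
  have "lperm t X = p0" unfolding lperm_def e by simp
  then show ?thesis using h e by auto
qed

lemma B_sub: "(B, p, X) \<in> set (occs t) \<Longrightarrow> B \<subseteq> lam t X"
  by (auto simp: lam_def)

lemma lam_fin: "finite (lam t X)"
proof -
  have "lam t X = \<Union> ((\<lambda>oc. fst oc) ` {oc \<in> set (occs t). snd (snd oc) = X})"
    by (auto simp: lam_def; force)
  moreover have "\<forall>oc \<in> set (occs t). finite (fst oc)"
    using occ_fin[of _ _ _ "{}" t] by (auto simp: occs_def)
  ultimately show ?thesis by auto
qed

lemma xsof_fin: "finite (xsof D t q X)"
  unfolding xsof_def using lam_fin by auto

lemma F1sub: "(B, p, X) \<in> set (occs t) \<Longrightarrow> (B0, p0, X) \<in> set (occs t) \<Longrightarrow> xsof D t p X \<subseteq> xsof D t p0 X"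
proof
  fix a assume o1: "(B, p, X) \<in> set (occs t)" and o2: "(B0, p0, X) \<in> set (occs t)" and a: "a \<in> xsof D t p X"
  then have pa: "Perm.apply p a \<in> lam t X" and nd: "(a, X) \<notin> D" by (auto simp: xsof_def)
  have "Perm.apply p0 a \<in> lam t X"
  proof (cases "Perm.apply p a = Perm.apply p0 a")
    case True then show ?thesis using pa by simp
  next
    case False
    then have "Perm.apply p0 a \<in> B0" using cond3[OF o1 o2 False] nd by blast
    then show ?thesis using B_sub[OF o2] by auto
  qed
  then show "a \<in> xsof D t p0 X" using nd unfolding xsof_def
    by (auto intro!: image_eqI[where x="Perm.apply p0 a"])
qed

lemma F1: "(B, p, X) \<in> set (occs t) \<Longrightarrow> (B0, p0, X) \<in> set (occs t) \<Longrightarrow> xsof D t p X = xsof D t p0 X"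
  using F1sub by blast

lemma F2: "(B, p, X) \<in> set (occs t) \<Longrightarrow> (B0, p0, X) \<in> set (occs t) \<Longrightarrow> (c, X) \<notin> D \<Longrightarrow>
  c \<notin> xsof D t p0 X \<Longrightarrow> Perm.apply p0 c \<notin> lam t X \<and> Perm.apply p c = Perm.apply p0 c"
proof -
  assume o1: "(B, p, X) \<in> set (occs t)" and o2: "(B0, p0, X) \<in> set (occs t)" and nd: "(c, X) \<notin> D"
    and nx: "c \<notin> xsof D t p0 X"
  have l: "Perm.apply p0 c \<notin> lam t X"
  proof
    assume "Perm.apply p0 c \<in> lam t X"
    then have "c \<in> xsof D t p0 X" using nd unfolding xsof_def
      by (auto intro!: image_eqI[where x="Perm.apply p0 c"])
    then show False using nx by simp
  qed
  have "Perm.apply p c = Perm.apply p0 c"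
  proof (rule ccontr)
    assume ne: "Perm.apply p c \<noteq> Perm.apply p0 c"
    have "Perm.apply p0 c \<notin> B0" using l B_sub[OF o2] by auto
    then show False using cond3[OF o1 o2 ne] nd by blast
  qed
  then show ?thesis using l by simp
qed

lemma V_some: "\<sigma> X = Some ti \<Longrightarrow> subst_tr D t \<sigma> X =
  Some (map (Perm.apply (lperm t X)) (sorted_list_of_set (xsof D t (lperm t X) X)),
        tr D (lam (pact (lperm t X) ti)) (pact (lperm t X) ti))"
  by (simp add: subst_tr_def xsof_def Let_def)

lemma sfv_fin: "finite (sfv (subst_tr D t \<sigma>))"
proof -
  let ?V = "subst_tr D t \<sigma>"
  have fd: "finite (dom \<sigma>)"
  proof (rule finite_subset[OF dm])
    show "finite (vars t)"
    proof (rule finite_subset[of _ "(\<lambda>oc. snd (snd oc)) ` set (occs t)"])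
      show "vars t \<subseteq> (\<lambda>oc. snd (snd oc)) ` set (occs t)" by (auto simp: vars_def image_iff; force)
    qed simp
  qed
  have "{fv s - set as | Z as s. ?V Z = Some (as, s)} \<subseteq>
        (\<lambda>Z. fv (snd (the (?V Z))) - set (fst (the (?V Z)))) ` dom \<sigma>"
  proof
    fix x assume "x \<in> {fv s - set as | Z as s. ?V Z = Some (as, s)}"
    then obtain Z as s where x: "x = fv s - set as" and v: "?V Z = Some (as, s)" by blast
    then have "Z \<in> dom \<sigma>" by (auto simp: subst_tr_def split: option.splits)
    then show "x \<in> (\<lambda>Z. fv (snd (the (?V Z))) - set (fst (the (?V Z)))) ` dom \<sigma>"
      using x v by force
  qed
  then have "finite {fv s - set as | Z as s. ?V Z = Some (as, s)}"
    using finite_subset fd by blast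
  then show ?thesis unfolding sfv_def by (auto simp: finite_fv)
qed

lemma sfvI: "subst_tr D t \<sigma> X = Some (as, s) \<Longrightarrow> x \<in> fv s \<Longrightarrow> x \<notin> set as \<Longrightarrow> x \<in> sfv (subst_tr D t \<sigma>)"
  unfolding sfv_def by blast

lemma tr_susp: "tr D (lam t) (Susp p X) = MVar X (map (\<lambda>a. MAtm (Perm.apply p a)) (sorted_list_of_set (xsof D t p X)))"
  by (simp add: xsof_def)

lemma fv_sub: "set (occsB B s) \<subseteq> set (occs t) \<Longrightarrow> x \<in> fv (tr D (lam t) (nsubst \<sigma> s)) \<Longrightarrow>
   x \<in> fv (tr D (lam t) s) \<or> (x \<in> sfv (subst_tr D t \<sigma>) \<and> x \<notin> B)"
proof (induction s arbitrary: B)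
  case (Susp p X)
  then have o: "(B, p, X) \<in> set (occs t)" by simp
  obtain ti where ti: "\<sigma> X = Some ti" "ns ti" using occ_some[OF o] by blast
  define p0 where "p0 = lperm t X"
  obtain B0 where o0: "(B0, p0, X) \<in> set (occs t)" using lperm_occ[OF o] p0_def by blast
  have "x \<in> fv (tr D (lam t) (pact p ti))" using Susp.prems(2) ti by simp
  then have nf: "\<not> fresh {} (Perm.apply (inverse p) x) ti"
    using fv_tr_ns[of "pact p ti"] ns_pact[of p ti] fresh_pact[OF ti(2)] ti(2) by auto
  define c where "c = Perm.apply (inverse p) x"
  have xc: "x = Perm.apply p c" by (simp add: c_def)
  have nfc: "\<not> fresh {} c ti" using nf unfolding c_def .
  have nd: "(c, X) \<notin> D" using Dfresh[OF _ ti(1)] nfc by blast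
  show ?case
  proof (cases "c \<in> xsof D t p0 X")
    case True
    then have "c \<in> set (sorted_list_of_set (xsof D t p X))"
      using F1[OF o o0] xsof_fin by simp
    then have "x \<in> fv (tr D (lam t) (Susp p X))" unfolding tr_susp xc by auto
    then show ?thesis by simp
  next
    case False
    from F2[OF o o0 nd False] have l: "Perm.apply p0 c \<notin> lam t X" and e: "Perm.apply p c = Perm.apply p0 c" by auto
    have x0: "x = Perm.apply p0 c" using xc e by simp
    have "x \<in> fv (tr D (lam (pact p0 ti)) (pact p0 ti))"
      unfolding x0 using fv_tr_ns[of "pact p0 ti"] ns_pact[of p0 ti] fresh_pact[OF ti(2)] ti(2) nfc by auto
    moreover have "x \<notin> set (map (Perm.apply p0) (sorted_list_of_set (xsof D t p0 X)))"
      using False xsof_fin unfolding x0 by (auto simp: apply_inj)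
    ultimately have "x \<in> sfv (subst_tr D t \<sigma>)"
      using sfvI[OF V_some[OF ti(1)]] p0_def by blast
    moreover have "x \<notin> B" using B_sub[OF o] l unfolding x0 by auto
    ultimately show ?thesis by simp
  qed
next
  case (Abs b s)
  have p: "set (occsB (insert b B) s) \<subseteq> set (occs t)" using Abs.prems(1) by simp
  have x: "x \<in> fv (tr D (lam t) (nsubst \<sigma> s))" "x \<noteq> b" using Abs.prems(2) by auto
  show ?case using Abs.IH[OF p x(1)] x(2) by auto
next
  case (Tup ts)
  obtain s where s: "s \<in> set ts" "x \<in> fv (tr D (lam t) (nsubst \<sigma> s))" using Tup.prems(2) by auto
  have p: "set (occsB B s) \<subseteq> set (occs t)" using Tup.prems(1) s(1) by auto
  show ?case using Tup.IH[OF s(1) p s(2)] s(1) by auto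
next
  case (Fn f s)
  then show ?case by simp
qed simp


lemma main_lem: "set (occsB B s) \<subseteq> set (occs t) \<Longrightarrow> \<rho> = MAtm \<circ> f \<Longrightarrow> (\<forall>x. x \<notin> B \<longrightarrow> f x = x) \<Longrightarrow>
  nl k g (vapp (subst_tr D t \<sigma>) \<rho> (tr D (lam t) s)) = nl k (g \<circ> f) (tr D (lam t) (nsubst \<sigma> s))"
proof (induction s arbitrary: B \<rho> f k g)
  case (Atm a)
  then show ?case by simp
next
  case (Susp p X)
  then have o: "(B, p, X) \<in> set (occs t)" by simp
  obtain ti where ti: "\<sigma> X = Some ti" "ns ti" using occ_some[OF o] by blast
  define p0 where "p0 = lperm t X"
  obtain B0 where o0: "(B0, p0, X) \<in> set (occs t)" using lperm_occ[OF o] p0_def by blast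
  define xs where "xs = sorted_list_of_set (xsof D t p X)"
  have xe: "xsof D t p X = xsof D t p0 X" using F1[OF o o0] .
  have sxs: "set xs = xsof D t p0 X" unfolding xs_def xe using xsof_fin by simp
  define s0 where "s0 = tr D (lam (pact p0 ti)) (pact p0 ti)"
  have vx: "subst_tr D t \<sigma> X = Some (map (Perm.apply p0) xs, s0)"
    unfolding V_some[OF ti(1)] xs_def xe s0_def p0_def by simp
  define h where "h = (\<lambda>y. if y \<in> set (map (Perm.apply p0) xs) then f (Perm.apply p (Perm.apply (inverse p0) y)) else y)"
  have m: "map (vapp (subst_tr D t \<sigma>) \<rho>) (map (\<lambda>a. MAtm (Perm.apply p a)) xs)
      = map (\<lambda>y. MAtm (f (Perm.apply p (Perm.apply (inverse p0) y)))) (map (Perm.apply p0) xs)"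
    using Susp.prems(2) by simp
  have rho': "(\<lambda>a. case map_of (zip (map (Perm.apply p0) xs) (map (vapp (subst_tr D t \<sigma>) \<rho>) (map (\<lambda>a. MAtm (Perm.apply p a)) xs))) a of
                 Some u \<Rightarrow> u | None \<Rightarrow> MAtm a) = MAtm \<circ> h"
    unfolding m map_of_zip_map by (auto simp: fun_eq_iff h_def)
  have lhs: "vapp (subst_tr D t \<sigma>) \<rho> (tr D (lam t) (Susp p X)) = msubst (MAtm \<circ> h) s0"
    unfolding tr_susp xs_def[symmetric] using vx rho' by simp
  have "nl k g (msubst (MAtm \<circ> h) s0) = nl k (g \<circ> h) s0" by (rule nl_msubst) simp
  also have "\<dots> = nl k ((g \<circ> h) \<circ> Perm.apply p0) (tr D (lam t) ti)"
    unfolding s0_def by (rule nl_tr_pact[OF ti(2)])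
  also have "\<dots> = nl k ((g \<circ> f) \<circ> Perm.apply p) (tr D (lam t) ti)"
  proof (rule nl_cong)
    fix c assume "c \<in> fv (tr D (lam t) ti)"
    then have nfc: "\<not> fresh {} c ti" using fv_tr_ns[OF ti(2)] by auto
    have nd: "(c, X) \<notin> D" using Dfresh[OF _ ti(1)] nfc by blast
    show "((g \<circ> h) \<circ> Perm.apply p0) c = ((g \<circ> f) \<circ> Perm.apply p) c"
    proof (cases "c \<in> xsof D t p0 X")
      case True
      then have "Perm.apply p0 c \<in> set (map (Perm.apply p0) xs)" using sxs by simp
      then show ?thesis by (simp add: h_def)
    next
      case False
      from F2[OF o o0 nd False] have l: "Perm.apply p0 c \<notin> lam t X" and e: "Perm.apply p c = Perm.apply p0 c" by auto
      have n: "Perm.apply p0 c \<notin> set (map (Perm.apply p0) xs)" using False sxs by (auto simp: apply_inj)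
      have "f (Perm.apply p0 c) = Perm.apply p0 c" using Susp.prems(3) l B_sub[OF o] by blast
      then show ?thesis using n e by (simp add: h_def)
    qed
  qed
  also have "\<dots> = nl k (g \<circ> f) (tr D (lam t) (pact p ti))"
    by (rule nl_tr_pact[OF ti(2), symmetric])
  finally have calc: "nl k g (msubst (MAtm \<circ> h) s0) = nl k (g \<circ> f) (tr D (lam t) (pact p ti))" .
  have ns: "nsubst \<sigma> (Susp p X) = pact p ti" using ti(1) by simp
  show ?case by (simp only: lhs calc ns)
next
  case (Abs b s)
  let ?V = "subst_tr D t \<sigma>"
  define S where "S = (\<Union>a\<in>fv (tr D (lam t) s) - {b}. fv (\<rho> a)) \<union> sfv ?V"
  define c where "c = fresh_for S b"
  have fin: "finite S" unfolding S_def by (simp add: finite_fv sfv_fin)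
  have cS: "c \<notin> S" unfolding c_def by (rule fresh_for_notin[OF fin])
  have p: "set (occsB (insert b B) s) \<subseteq> set (occs t)" using Abs.prems(1) by simp
  have e: "\<rho>(b := MAtm c) = MAtm \<circ> f(b := c)" using Abs.prems(2) by auto
  have inv: "\<forall>x. x \<notin> insert b B \<longrightarrow> (f(b := c)) x = x" using Abs.prems(3) by auto
  have "vapp ?V \<rho> (tr D (lam t) (Abs b s)) = MAbs c (vapp ?V (\<rho>(b := MAtm c)) (tr D (lam t) s))"
    by (simp add: Let_def S_def[symmetric] c_def[symmetric])
  then have "nl k g (vapp ?V \<rho> (tr D (lam t) (Abs b s))) = DAbs (nl (Suc k) (g(c := DL k)) (vapp ?V (\<rho>(b := MAtm c)) (tr D (lam t) s)))"
    by simp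
  also have "\<dots> = DAbs (nl (Suc k) (g(c := DL k) \<circ> f(b := c)) (tr D (lam t) (nsubst \<sigma> s)))"
    by (subst Abs.IH[OF p e inv]) (rule refl)
  also have "\<dots> = DAbs (nl (Suc k) ((g \<circ> f)(b := DL k)) (tr D (lam t) (nsubst \<sigma> s)))"
  proof (rule arg_cong[where f=DAbs], rule nl_cong)
    fix x assume x: "x \<in> fv (tr D (lam t) (nsubst \<sigma> s))"
    show "(g(c := DL k) \<circ> f(b := c)) x = ((g \<circ> f)(b := DL k)) x"
    proof (cases "x = b")
      case False
      have "f x \<in> S"
      proof (cases "x \<in> fv (tr D (lam t) s)")
        case True
        then show ?thesis using False Abs.prems(2) unfolding S_def by auto
      next
        case nt: False
        then have "x \<in> sfv ?V" "x \<notin> insert b B" using fv_sub[OF p x] by auto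
        then show ?thesis using Abs.prems(3) unfolding S_def by auto
      qed
      then show ?thesis using False cS by auto
    qed simp
  qed
  also have "\<dots> = nl k (g \<circ> f) (tr D (lam t) (nsubst \<sigma> (Abs b s)))" by simp
  finally show ?case .
next
  case (Fn h s)
  have p: "set (occsB B s) \<subseteq> set (occs t)" using Fn.prems(1) by simp
  show ?case using Fn.IH[OF p Fn.prems(2) Fn.prems(3), of k g] by simp
next
  case (Tup ts)
  have "\<forall>s\<in>set ts. nl k g (vapp (subst_tr D t \<sigma>) \<rho> (tr D (lam t) s)) = nl k (g \<circ> f) (tr D (lam t) (nsubst \<sigma> s))"
  proof
    fix s assume s: "s \<in> set ts"
    have p: "set (occsB B s) \<subseteq> set (occs t)" using Tup.prems(1) s by auto
    show "nl k g (vapp (subst_tr D t \<sigma>) \<rho> (tr D (lam t) s)) = nl k (g \<circ> f) (tr D (lam t) (nsubst \<sigma> s))"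
      by (rule Tup.IH[OF s p Tup.prems(2) Tup.prems(3)])
  qed
  then show ?case by (simp del: comp_apply cong: map_cong) (simp only: comp_apply)
qed

end


theorem mainTheorem9:
  fixes D :: "(atom \<times> 'v) set" and t :: "('f, 'v) nterm" and \<sigma> :: "'v \<rightharpoonup> ('f, 'v) nterm"
  assumes "closed D t"
    and "\<forall>(a, X) \<in> D. fresh {} a (nsubst \<sigma> (Susp 1 X))"
    and "dom \<sigma> \<subseteq> vars t"
    and "ground (nsubst \<sigma> t)"
  shows "\<forall>t' \<in> subterms t.
           alpha (tr D (lam t) (nsubst \<sigma> t'))
                 (apply_val (subst_tr D t \<sigma>) (tr D (lam t) t'))"
proof
  fix t' assume "t' \<in> subterms t"
  then obtain B' where b: "set (occsB B' t') \<subseteq> set (occs t)"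
    using sub_occ[of t' t "{}"] by (auto simp: occs_def)
  have "nl 0 DF (vapp (subst_tr D t \<sigma>) (MAtm \<circ> id) (tr D (lam t) t')) = nl 0 (DF \<circ> id) (tr D (lam t) (nsubst \<sigma> t'))"
    by (rule main_lem[OF assms b]) auto
  then have "nl 0 DF (tr D (lam t) (nsubst \<sigma> t')) = nl 0 DF (apply_val (subst_tr D t \<sigma>) (tr D (lam t) t'))"
    by (simp add: apply_val_def comp_def)
  then show "alpha (tr D (lam t) (nsubst \<sigma> t')) (apply_val (subst_tr D t \<sigma>) (tr D (lam t) t'))"
    by (rule nl_alpha)
qed


end
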